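(* Let $\Delta\subset G_{2m}$ be an open bounded set with $(\overline\Delta-\overline\Delta)\cap{\rm Sp}\,U=\{0\}$, and let $\Delta_1,\Delta_2\subset H_m$ be compact, disjoint, with $\Delta_1+\Delta_2\subset\Delta$. Then there exist disjoint open neighbourhoods $O_1,O_2\subset\mathbb{R}^{1+d}$ of $\Delta_1,\Delta_2$ respectively such that for all compact $K_1,K_2\subset\mathbb{R}^{1+d}$ with $-K_i\subset O_i$ and $-K_i\cap{\rm Sp}\,U\subset\Delta_i$ ($i=1,2$) one has: $(\overline\Delta+K_1+K_2)\cap{\rm Sp}\,U\subset\{0\}$; $-(K_1+K_2)\subset\Delta$; $(\Delta_i+K_i)\cap{\rm Sp}\,U\subset\{0\}$ for $i=1,2$; and $(\Delta_i+K_j)\cap{\rm Sp}\,U=\emptyset$ for $i\ne j$.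
   Context: ${\rm Sp}\,U\subset\mathbb{R}^{1+d}$ is a set of the form $\{0\}\cup H_m\cup G_\mu$ with $H_m=\{(E,p)\in\mathbb{R}^{1+d}:E=\sqrt{p^2+m^2}\}$, $G_\mu=\{(E,p):E\ge\sqrt{p^2+\mu^2}\}$, $0<m<\mu\le2m$ (it is the joint spectrum of the energy-momentum operators of a translation representation $U$). $G_{2m}$ is $G_\mu$ with $\mu=2m$. *)

theory Defs
  imports "HOL-Analysis.Analysis"
begin

definition mass_shell :: "real \<Rightarrow> (real \<times> (real^'d)) set" where
  "mass_shell m = {(E, p). E = sqrt ((norm p)\<^sup>2 + m\<^sup>2)}"

definition multi_cont :: "real \<Rightarrow> (real \<times> (real^'d)) set" where
  "multi_cont \<mu> = {(E, p). E \<ge> sqrt ((norm p)\<^sup>2 + \<mu>\<^sup>2)}"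

definition SpU :: "real \<Rightarrow> real \<Rightarrow> (real \<times> (real^'d)) set" where
  "SpU m \<mu> = {0} \<union> mass_shell m \<union> multi_cont \<mu>"

definition msum :: "'a::ab_group_add set \<Rightarrow> 'a set \<Rightarrow> 'a set" where
  "msum A B = {a + b | a b. a \<in> A \<and> b \<in> B}"

definition mdiff :: "'a::ab_group_add set \<Rightarrow> 'a set \<Rightarrow> 'a set" where
  "mdiff A B = {a - b | a b. a \<in> A \<and> b \<in> B}"

end

theory Submission
  imports Defs
begin

lemma sqrt_lip:
  fixes x y m :: real assumes "0 \<le> y"
  shows "sqrt (x\<^sup>2 + m\<^sup>2) \<le> sqrt (y\<^sup>2 + m\<^sup>2) + \<bar>x - y\<bar>"
proof (rule real_le_lsqrt)
  have s: "y \<le> sqrt (y\<^sup>2 + m\<^sup>2)" by (rule real_le_rsqrt) simp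
  have sq: "(sqrt (y\<^sup>2 + m\<^sup>2))\<^sup>2 = y\<^sup>2 + m\<^sup>2" by simp
  show "0 \<le> sqrt (y\<^sup>2 + m\<^sup>2) + \<bar>x - y\<bar>" by simp
  have "x\<^sup>2 \<le> y\<^sup>2 + 2 * y * \<bar>x - y\<bar> + (x - y)\<^sup>2"
    using assms by (cases "x \<ge> y") (auto simp: power2_eq_square algebra_simps mult_right_mono)
  also have "\<dots> \<le> y\<^sup>2 + 2 * sqrt (y\<^sup>2 + m\<^sup>2) * \<bar>x - y\<bar> + (x - y)\<^sup>2"
    using s by (simp add: mult_right_mono)
  finally show "x\<^sup>2 + m\<^sup>2 \<le> (sqrt (y\<^sup>2 + m\<^sup>2) + \<bar>x - y\<bar>)\<^sup>2"
    by (simp add: power2_sum sq power2_abs)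
qed

lemma key:
  fixes a c :: "real \<times> (real^'d)"
  assumes "0 < m" "m < \<mu>" "a \<in> mass_shell m" "c \<in> mass_shell m"
  shows "a - c \<notin> mass_shell m \<union> multi_cont \<mu>"
proof
  assume h: "a - c \<in> mass_shell m \<union> multi_cont \<mu>"
  obtain E1 p1 E2 p2 where ac: "a = (E1, p1)" "c = (E2, p2)" by (cases a, cases c) auto
  have e1: "E1 = sqrt ((norm p1)\<^sup>2 + m\<^sup>2)" "E2 = sqrt ((norm p2)\<^sup>2 + m\<^sup>2)"
    using assms(3,4) ac by (auto simp: mass_shell_def)
  have "sqrt ((norm (p1 - p2))\<^sup>2 + m\<^sup>2) \<le> sqrt ((norm (p1 - p2))\<^sup>2 + \<mu>\<^sup>2)"
    using assms(1,2) by (simp add: power_strict_mono less_imp_le)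
  note le = this
  have ge: "E1 - E2 \<ge> sqrt ((norm (p1 - p2))\<^sup>2 + m\<^sup>2)"
    using h ac order_trans[OF le] unfolding mass_shell_def multi_cont_def by auto
  have gt: "norm (p1 - p2) < sqrt ((norm (p1 - p2))\<^sup>2 + m\<^sup>2)"
    by (rule real_less_rsqrt) (use assms(1) in simp)
  have "E1 - E2 \<le> \<bar>norm p1 - norm p2\<bar>"
    using sqrt_lip[of "norm p2" "norm p1" m] e1 by simp
  also have "\<dots> \<le> norm (p1 - p2)" by (rule norm_triangle_ineq3)
  finally show False using ge gt by simp
qed

lemma closed_C: "closed (mass_shell m \<union> multi_cont \<mu> :: (real \<times> (real^'d)) set)"
proof -
  have "mass_shell m = {z :: real \<times> (real^'d). fst z = sqrt ((norm (snd z))\<^sup>2 + m\<^sup>2)}"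
    by (auto simp: mass_shell_def)
  moreover have "multi_cont \<mu> = {z :: real \<times> (real^'d). sqrt ((norm (snd z))\<^sup>2 + \<mu>\<^sup>2) \<le> fst z}"
    by (auto simp: multi_cont_def)
  ultimately show ?thesis
    by (auto intro!: closed_Un closed_Collect_eq closed_Collect_le continuous_intros)
qed

lemma SpU_eq: "0 < m \<Longrightarrow> m < \<mu> \<Longrightarrow> SpU m \<mu> = insert 0 (mass_shell m \<union> multi_cont \<mu>)"
  by (auto simp: SpU_def)

lemma near_contra:
  fixes a x k :: "'a::real_normed_vector"
  assumes "\<forall>u\<in>A. \<forall>v\<in>T. d \<le> dist u v" "a - x \<in> A" "a + k \<in> T" "dist x (-k) < d"
  shows False
proof -
  have "dist (a - x) (a + k) = dist x (-k)"
    by (simp add: dist_norm algebra_simps norm_minus_commute)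
  thus False using assms by force
qed

theorem lemma7p3:
  fixes m \<mu> :: real
    and \<Delta> \<Delta>1 \<Delta>2 :: "(real \<times> (real^'d)) set"
  assumes "0 < m" and "m < \<mu>" and "\<mu> \<le> 2 * m"
    and "open \<Delta>" and "bounded \<Delta>" and "\<Delta> \<subseteq> multi_cont (2 * m)"
    and "mdiff (closure \<Delta>) (closure \<Delta>) \<inter> SpU m \<mu> = {0}"
    and "compact \<Delta>1" and "compact \<Delta>2"
    and "\<Delta>1 \<subseteq> mass_shell m" and "\<Delta>2 \<subseteq> mass_shell m"
    and "\<Delta>1 \<inter> \<Delta>2 = {}"
    and "msum \<Delta>1 \<Delta>2 \<subseteq> \<Delta>"
  shows "\<exists>O1 O2. open O1 \<and> open O2 \<and> \<Delta>1 \<subseteq> O1 \<and> \<Delta>2 \<subseteq> O2 \<and> O1 \<inter> O2 = {} \<and>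
    (\<forall>K1 K2. compact K1 \<and> compact K2 \<and>
        uminus ` K1 \<subseteq> O1 \<and> uminus ` K2 \<subseteq> O2 \<and>
        uminus ` K1 \<inter> SpU m \<mu> \<subseteq> \<Delta>1 \<and> uminus ` K2 \<inter> SpU m \<mu> \<subseteq> \<Delta>2 \<longrightarrow>
        msum (msum (closure \<Delta>) K1) K2 \<inter> SpU m \<mu> \<subseteq> {0} \<and>
        uminus ` (msum K1 K2) \<subseteq> \<Delta> \<and>
        msum \<Delta>1 K1 \<inter> SpU m \<mu> \<subseteq> {0} \<and>
        msum \<Delta>2 K2 \<inter> SpU m \<mu> \<subseteq> {0} \<and>
        msum \<Delta>1 K2 \<inter> SpU m \<mu> = {} \<and>
        msum \<Delta>2 K1 \<inter> SpU m \<mu> = {})"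
proof -
  define C where "C = (mass_shell m \<union> multi_cont \<mu> :: (real \<times> (real^'d)) set)"
  have S: "SpU m \<mu> = insert 0 C" using SpU_eq[OF assms(1,2)] C_def by simp
  have clC: "closed C" unfolding C_def by (rule closed_C)
  define A1 where "A1 = mdiff \<Delta>1 \<Delta>1 \<union> mdiff \<Delta>2 \<Delta>2"
  define A2 where "A2 = mdiff \<Delta>1 \<Delta>2 \<union> mdiff \<Delta>2 \<Delta>1"
  have cA1: "compact A1" unfolding A1_def mdiff_def
    using assms(8,9) by (intro compact_Un compact_differences)
  have cA2: "compact A2" unfolding A2_def mdiff_def
    using assms(8,9) by (intro compact_Un compact_differences)
  have dA1: "A1 \<inter> C = {}"
    using key[OF assms(1,2)] assms(10,11) unfolding A1_def mdiff_def C_def by blast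
  have dA2: "A2 \<inter> insert 0 C = {}"
  proof (rule ccontr)
    assume "A2 \<inter> insert 0 C \<noteq> {}"
    then obtain a c where ac: "a \<in> mass_shell m" "c \<in> mass_shell m" "a \<noteq> c"
      "a - c \<in> insert 0 C"
      using assms(10,11,12) unfolding A2_def mdiff_def by blast
    hence "a - c \<in> C" by auto
    thus False using key[OF assms(1,2) ac(1,2)] unfolding C_def by blast
  qed
  have cP: "compact (msum \<Delta>1 \<Delta>2)" unfolding msum_def using assms(8,9) by (rule compact_sums)
  obtain d1 where d1: "d1 > 0" "\<forall>u\<in>A1. \<forall>v\<in>C. d1 \<le> dist u v"
    using separate_compact_closed[OF cA1 clC dA1] by blast
  obtain d2 where d2: "d2 > 0" "\<forall>u\<in>A2. \<forall>v\<in>insert 0 C. d2 \<le> dist u v"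
    using separate_compact_closed[OF cA2 closed_insert[OF clC] dA2] by blast
  obtain d3 where d3: "d3 > 0" "\<forall>u\<in>msum \<Delta>1 \<Delta>2. \<forall>v\<in>-\<Delta>. d3 \<le> dist u v"
    using separate_compact_closed[OF cP, of "-\<Delta>"] assms(4,13) by blast
  obtain d4 where d4: "d4 > 0" "\<forall>u\<in>\<Delta>1. \<forall>v\<in>\<Delta>2. d4 \<le> dist u v"
    using separate_compact_closed[OF assms(8) compact_imp_closed[OF assms(9)] assms(12)] by blast
  define e where "e = min (min d1 d2) (min d3 d4) / 2"
  have e: "e > 0" "e < d1" "e < d2" "2 * e \<le> d3" "2 * e \<le> d4"
    using d1 d2 d3 d4 unfolding e_def by auto
  define O1 where "O1 = (\<Union>x\<in>\<Delta>1. ball x e)"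
  define O2 where "O2 = (\<Union>x\<in>\<Delta>2. ball x e)"
  have "open O1" "open O2" unfolding O1_def O2_def by auto
  moreover have "\<Delta>1 \<subseteq> O1" "\<Delta>2 \<subseteq> O2" unfolding O1_def O2_def using e(1) by auto
  moreover have "O1 \<inter> O2 = {}"
  proof (rule ccontr)
    assume "O1 \<inter> O2 \<noteq> {}"
    then obtain y x1 x2 where "x1 \<in> \<Delta>1" "x2 \<in> \<Delta>2" "dist x1 y < e" "dist x2 y < e"
      unfolding O1_def O2_def by auto
    moreover have "dist x1 x2 \<le> dist x1 y + dist x2 y" by (rule dist_triangle2)
    ultimately show False using d4(2) e(5) by fastforce
  qed
  moreover have "\<forall>K1 K2. compact K1 \<and> compact K2 \<and>
        uminus ` K1 \<subseteq> O1 \<and> uminus ` K2 \<subseteq> O2 \<and>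
        uminus ` K1 \<inter> SpU m \<mu> \<subseteq> \<Delta>1 \<and> uminus ` K2 \<inter> SpU m \<mu> \<subseteq> \<Delta>2 \<longrightarrow>
        msum (msum (closure \<Delta>) K1) K2 \<inter> SpU m \<mu> \<subseteq> {0} \<and>
        uminus ` (msum K1 K2) \<subseteq> \<Delta> \<and>
        msum \<Delta>1 K1 \<inter> SpU m \<mu> \<subseteq> {0} \<and>
        msum \<Delta>2 K2 \<inter> SpU m \<mu> \<subseteq> {0} \<and>
        msum \<Delta>1 K2 \<inter> SpU m \<mu> = {} \<and>
        msum \<Delta>2 K1 \<inter> SpU m \<mu> = {}"
  proof (intro allI impI)
    fix K1 K2 :: "(real \<times> (real^'d)) set"
    assume H: "compact K1 \<and> compact K2 \<and>
        uminus ` K1 \<subseteq> O1 \<and> uminus ` K2 \<subseteq> O2 \<and>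
        uminus ` K1 \<inter> SpU m \<mu> \<subseteq> \<Delta>1 \<and> uminus ` K2 \<inter> SpU m \<mu> \<subseteq> \<Delta>2"
    have n1: "\<exists>x\<in>\<Delta>1. dist x (-k) < e" if "k \<in> K1" for k
      proof -
      have "-k \<in> O1" using H that by blast
      thus ?thesis unfolding O1_def by auto
    qed
    have n2: "\<exists>x\<in>\<Delta>2. dist x (-k) < e" if "k \<in> K2" for k
      proof -
      have "-k \<in> O2" using H that by blast
      thus ?thesis unfolding O2_def by auto
    qed
    have B: "-(k1 + k2) \<in> \<Delta>" if "k1 \<in> K1" "k2 \<in> K2" for k1 k2
    proof (rule ccontr)
      assume nin: "-(k1 + k2) \<notin> \<Delta>"
      obtain x1 where x1: "x1 \<in> \<Delta>1" "dist x1 (-k1) < e" using n1[OF \<open>k1 \<in> K1\<close>] by blast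
      obtain x2 where x2: "x2 \<in> \<Delta>2" "dist x2 (-k2) < e" using n2[OF \<open>k2 \<in> K2\<close>] by blast
      have "x1 + x2 \<in> msum \<Delta>1 \<Delta>2" using x1 x2 unfolding msum_def by blast
      hence "d3 \<le> dist (x1 + x2) ((-k1) + (-k2))" using d3(2) nin by (simp add: add.commute)
      moreover have "dist (x1 + x2) ((-k1) + (-k2)) \<le> dist x1 (-k1) + dist x2 (-k2)"
        by (rule dist_triangle_add)
      ultimately show False using x1 x2 e by linarith
    qed
    have "uminus ` (msum K1 K2) \<subseteq> \<Delta>" unfolding msum_def using B by auto
    moreover have "msum (msum (closure \<Delta>) K1) K2 \<inter> SpU m \<mu> \<subseteq> {0}"
    proof
      fix z assume z: "z \<in> msum (msum (closure \<Delta>) K1) K2 \<inter> SpU m \<mu>"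
      then obtain c k1 k2 where "c \<in> closure \<Delta>" "k1 \<in> K1" "k2 \<in> K2" "z = c + k1 + k2"
        unfolding msum_def by auto
      moreover have "-(k1 + k2) \<in> closure \<Delta>" using B[OF \<open>k1 \<in> K1\<close> \<open>k2 \<in> K2\<close>] closure_subset by blast
      moreover have "c + k1 + k2 = c - (-(k1 + k2))" by (simp add: algebra_simps)
      ultimately have "z \<in> mdiff (closure \<Delta>) (closure \<Delta>)" unfolding mdiff_def
        by blast
      thus "z \<in> {0}" using z assms(7) by blast
    qed
    moreover have "msum \<Delta>1 K1 \<inter> SpU m \<mu> \<subseteq> {0}"
    proof
      fix z assume z: "z \<in> msum \<Delta>1 K1 \<inter> SpU m \<mu>"
      then obtain a k where ak: "a \<in> \<Delta>1" "k \<in> K1" "z = a + k" unfolding msum_def by auto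
      obtain x where x: "x \<in> \<Delta>1" "dist x (-k) < e" using n1[OF ak(2)] by blast
      show "z \<in> {0}"
      proof (rule ccontr)
        assume "z \<notin> {0}"
        hence "a + k \<in> C" using z S ak by auto
        moreover have "a - x \<in> A1" using ak x unfolding A1_def mdiff_def by blast
        ultimately show False using near_contra[OF d1(2)] x(2) e(2) by (meson order.strict_trans)
      qed
    qed
    moreover have "msum \<Delta>2 K2 \<inter> SpU m \<mu> \<subseteq> {0}"
    proof
      fix z assume z: "z \<in> msum \<Delta>2 K2 \<inter> SpU m \<mu>"
      then obtain a k where ak: "a \<in> \<Delta>2" "k \<in> K2" "z = a + k" unfolding msum_def by auto
      obtain x where x: "x \<in> \<Delta>2" "dist x (-k) < e" using n2[OF ak(2)] by blast
      show "z \<in> {0}"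
      proof (rule ccontr)
        assume "z \<notin> {0}"
        hence "a + k \<in> C" using z S ak by auto
        moreover have "a - x \<in> A1" using ak x unfolding A1_def mdiff_def by blast
        ultimately show False using near_contra[OF d1(2)] x(2) e(2) by (meson order.strict_trans)
      qed
    qed
    moreover have "msum \<Delta>1 K2 \<inter> SpU m \<mu> = {}"
    proof (rule ccontr)
      assume "msum \<Delta>1 K2 \<inter> SpU m \<mu> \<noteq> {}"
      then obtain a k where ak: "a \<in> \<Delta>1" "k \<in> K2" "a + k \<in> insert 0 C"
        unfolding msum_def S by blast
      obtain x where x: "x \<in> \<Delta>2" "dist x (-k) < e" using n2[OF ak(2)] by blast
      have "a - x \<in> A2" using ak x unfolding A2_def mdiff_def by blast
      thus False using near_contra[OF d2(2) _ ak(3)] x(2) e(3) by (meson order.strict_trans)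
    qed
    moreover have "msum \<Delta>2 K1 \<inter> SpU m \<mu> = {}"
    proof (rule ccontr)
      assume "msum \<Delta>2 K1 \<inter> SpU m \<mu> \<noteq> {}"
      then obtain a k where ak: "a \<in> \<Delta>2" "k \<in> K1" "a + k \<in> insert 0 C"
        unfolding msum_def S by blast
      obtain x where x: "x \<in> \<Delta>1" "dist x (-k) < e" using n1[OF ak(2)] by blast
      have "a - x \<in> A2" using ak x unfolding A2_def mdiff_def by blast
      thus False using near_contra[OF d2(2) _ ak(3)] x(2) e(3) by (meson order.strict_trans)
    qed
    ultimately show "msum (msum (closure \<Delta>) K1) K2 \<inter> SpU m \<mu> \<subseteq> {0} \<and>
        uminus ` (msum K1 K2) \<subseteq> \<Delta> \<and>
        msum \<Delta>1 K1 \<inter> SpU m \<mu> \<subseteq> {0} \<and>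
        msum \<Delta>2 K2 \<inter> SpU m \<mu> \<subseteq> {0} \<and>
        msum \<Delta>1 K2 \<inter> SpU m \<mu> = {} \<and>
        msum \<Delta>2 K1 \<inter> SpU m \<mu> = {}" by blast
  qed
  ultimately show ?thesis by blast
qed

end
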